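(* Let $\beta\in\mathbb{C}$ and $N\geq2$ with $\beta^N=1$ and $\beta^k\neq1$ for $k=1,\dots,N-1$. Let $m\in\mathrm{Hol}(\mathbb{D})$, $m\not\equiv0$, $T:\mathrm{Hol}(\mathbb{D})\to\mathrm{Hol}(\mathbb{D})$ given by $(Tf)(z)=m(z)f(\beta z)$, and $m_N(z)=m(z)m(\beta z)\cdots m(\beta^{N-1}z)$. Then $\sigma(T)=\{\lambda\in\mathbb{C}:\lambda^N\in m_N(\mathbb{D})\}$.
   Context: $\mathbb{D}$ is the open unit disc, $\mathrm{Hol}(\mathbb{D})$ the Fréchet space of holomorphic functions on $\mathbb{D}$. $\sigma(T)$ is the set of $\lambda\in\mathbb{C}$ such that $\lambda\mathrm{Id}-T$ is not bijective. *)

theory Defs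
  imports "HOL-Complex_Analysis.Complex_Analysis"
begin

text \<open>Hol(D): holomorphic functions on the open unit disc. Each element is represented
canonically by a function holomorphic on the disc and equal to 0 outside it.\<close>
definition Hol_disc :: "(complex \<Rightarrow> complex) set" where
  "Hol_disc = {f. f holomorphic_on ball 0 1 \<and> (\<forall>z. z \<notin> ball 0 1 \<longrightarrow> f z = 0)}"

definition wcomp_op :: "complex \<Rightarrow> (complex \<Rightarrow> complex) \<Rightarrow> (complex \<Rightarrow> complex) \<Rightarrow> (complex \<Rightarrow> complex)" where
  "wcomp_op \<beta> m f = (\<lambda>z. if z \<in> ball 0 1 then m z * f (\<beta> * z) else 0)"

definition spectrum_Hol :: "((complex \<Rightarrow> complex) \<Rightarrow> (complex \<Rightarrow> complex)) \<Rightarrow> complex set" where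
  "spectrum_Hol T = {c. \<not> bij_betw (\<lambda>f. \<lambda>z. c * f z - T f z) Hol_disc Hol_disc}"

end

theory Submission
  imports Defs
begin

definition Pm :: "complex \<Rightarrow> (complex \<Rightarrow> complex) \<Rightarrow> nat \<Rightarrow> complex \<Rightarrow> complex" where
  "Pm \<beta> m k z = (\<Prod>i<k. m (\<beta> ^ i * z))"

definition Lop :: "complex \<Rightarrow> (complex \<Rightarrow> complex) \<Rightarrow> complex \<Rightarrow> (complex \<Rightarrow> complex) \<Rightarrow> (complex \<Rightarrow> complex)" where
  "Lop \<beta> m c f = (\<lambda>z. c * f z - wcomp_op \<beta> m f z)"

lemma spec_iff: "c \<in> spectrum_Hol (wcomp_op \<beta> m) \<longleftrightarrow> \<not> bij_betw (Lop \<beta> m c) Hol_disc Hol_disc"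
  by (simp add: spectrum_Hol_def Lop_def[abs_def])

lemma prod_shift_cyc:
  assumes "g N = g 0"
  shows "(\<Prod>i<N. g (Suc i)) = (\<Prod>i<N. (g i :: complex))"
proof (cases N)
  case 0 then show ?thesis by simp
next
  case (Suc n)
  have "(\<Prod>i<Suc n. g (Suc i)) = (\<Prod>i<n. g (Suc i)) * g (Suc n)" by simp
  also have "\<dots> = g 0 * (\<Prod>i<n. g (Suc i))" using assms Suc by simp
  also have "\<dots> = (\<Prod>i<Suc n. g i)" by (rule prod.lessThan_Suc_shift[symmetric])
  finally show ?thesis using Suc by simp
qed

lemma zero_at_0:
  assumes "q holomorphic_on ball 0 1" "\<forall>z\<in>ball 0 1. z \<noteq> 0 \<longrightarrow> q z = 0"
  shows "q (0::complex) = 0"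
proof -
  have "isCont q 0" using assms(1)
    by (meson centre_in_ball holomorphic_on_imp_continuous_on continuous_on_eq_continuous_at open_ball zero_less_one)
  hence "(q \<longlongrightarrow> q 0) (at 0)" by (simp add: isCont_def)
  moreover have "eventually (\<lambda>z. q z = 0) (at (0::complex))"
    unfolding eventually_at by (rule exI[of _ 1]) (use assms(2) in \<open>auto simp: dist_norm\<close>)
  ultimately have "((\<lambda>z. 0) \<longlongrightarrow> q 0) (at (0::complex))"
    by (rule Lim_transform_eventually)
  thus ?thesis using LIM_const_eq by metis
qed

context
  fixes \<beta> :: complex and N :: nat and m :: "complex \<Rightarrow> complex"
  assumes N2: "N \<ge> 2" and bN: "\<beta> ^ N = 1" and bk: "\<forall>k\<in>{1..<N}. \<beta> ^ k \<noteq> 1"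
    and mhol: "m holomorphic_on ball 0 1"
begin

lemma norm_b: "norm \<beta> = 1"
  using power_eq_1_iff[OF bN] N2 by auto

lemma bz_ball: "z \<in> ball 0 1 \<Longrightarrow> \<beta> ^ k * z \<in> ball 0 1"
  by (simp add: norm_mult norm_power norm_b)

lemma bz_ball1: "z \<in> ball 0 1 \<Longrightarrow> \<beta> * z \<in> ball 0 1"
  using bz_ball[of z 1] by simp

lemma hol_comp: "q holomorphic_on ball 0 1 \<Longrightarrow> (\<lambda>z. q (\<beta> ^ k * z)) holomorphic_on ball 0 1"
proof -
  assume q: "q holomorphic_on ball 0 1"
  have "(\<lambda>z. \<beta> ^ k * z) holomorphic_on ball 0 1" by (intro holomorphic_intros)
  moreover have "(\<lambda>z. \<beta> ^ k * z) ` ball 0 1 \<subseteq> ball 0 1" using bz_ball by auto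
  ultimately show ?thesis using holomorphic_on_compose_gen[OF _ q] by (simp add: o_def)
qed

lemma Pm_hol: "(\<lambda>z. Pm \<beta> m k z) holomorphic_on ball 0 1"
  unfolding Pm_def by (intro holomorphic_on_prod hol_comp mhol)

lemma Lop_ball: "z \<in> ball 0 1 \<Longrightarrow> Lop \<beta> m c f z = c * f z - m z * f (\<beta> * z)"
  by (simp add: Lop_def wcomp_op_def)

lemma Lop_out: "z \<notin> ball 0 1 \<Longrightarrow> f \<in> Hol_disc \<Longrightarrow> Lop \<beta> m c f z = 0"
  by (simp add: Lop_def wcomp_op_def Hol_disc_def)

lemma Lop_Hol: "f \<in> Hol_disc \<Longrightarrow> Lop \<beta> m c f \<in> Hol_disc"
proof -
  assume f: "f \<in> Hol_disc"
  hence fh: "f holomorphic_on ball 0 1" by (simp add: Hol_disc_def)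
  have "(\<lambda>z. c * f z - m z * f (\<beta> ^ 1 * z)) holomorphic_on ball 0 1"
    using hol_comp[OF fh, of 1] fh mhol by (intro holomorphic_intros) auto
  hence "Lop \<beta> m c f holomorphic_on ball 0 1"
    by (rule holomorphic_transform) (simp add: Lop_ball)
  thus ?thesis using Lop_out[OF _ f] by (simp add: Hol_disc_def)
qed

lemma Lop_diff: "Lop \<beta> m c (\<lambda>z. f z - g z) z = Lop \<beta> m c f z - Lop \<beta> m c g z"
  by (simp add: Lop_def wcomp_op_def algebra_simps)

lemma Pm_Suc2: "Pm \<beta> m (Suc k) z = Pm \<beta> m k z * m (\<beta> ^ k * z)"
  by (simp add: Pm_def)

lemma Pm_Suc: "Pm \<beta> m (Suc k) z = m z * Pm \<beta> m k (\<beta> * z)"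
  unfolding Pm_def prod.lessThan_Suc_shift by (simp add: mult_ac)

lemma telescope:
  assumes z: "z \<in> ball 0 1"
  shows "(\<Sum>k<N. c ^ (N - 1 - k) * Pm \<beta> m k z * Lop \<beta> m c f (\<beta> ^ k * z))
         = (c ^ N - Pm \<beta> m N z) * f z"
proof -
  define a where "a k = c ^ (N - k) * Pm \<beta> m k z * f (\<beta> ^ k * z)" for k
  have eq: "c ^ (N - 1 - k) * Pm \<beta> m k z * Lop \<beta> m c f (\<beta> ^ k * z) = a k - a (Suc k)"
    if "k < N" for k
  proof -
    have "N - k = Suc (N - Suc k)" using that by simp
    hence e1: "c ^ (N - k) = c ^ (N - Suc k) * c" by simp
    have e2: "N - 1 - k = N - Suc k" by simp
    have e3: "Lop \<beta> m c f (\<beta> ^ k * z) = c * f (\<beta> ^ k * z) - m (\<beta> ^ k * z) * f (\<beta> ^ Suc k * z)"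
      using Lop_ball[OF bz_ball[OF z]] by (simp add: mult.assoc)
    show ?thesis unfolding e3 a_def e1 e2 Pm_Suc2 by (simp add: algebra_simps)
  qed
  have "(\<Sum>k<N. c ^ (N - 1 - k) * Pm \<beta> m k z * Lop \<beta> m c f (\<beta> ^ k * z)) = (\<Sum>k<N. a k - a (Suc k))"
    using eq by simp
  also have "\<dots> = a 0 - a N" by (rule sum_lessThan_telescope')
  also have "\<dots> = (c ^ N - Pm \<beta> m N z) * f z"
    by (simp add: a_def Pm_def bN algebra_simps)
  finally show ?thesis .
qed

lemma resolvent:
  assumes "c ^ N \<notin> (\<lambda>z. Pm \<beta> m N z) ` ball 0 1"
  shows "bij_betw (Lop \<beta> m c) Hol_disc Hol_disc"
proof -
  have h: "c ^ N - Pm \<beta> m N z \<noteq> 0" if "z \<in> ball 0 1" for z using assms that by force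
  have inj: "inj_on (Lop \<beta> m c) Hol_disc"
  proof (rule inj_onI)
    fix f g assume f: "f \<in> Hol_disc" and g: "g \<in> Hol_disc" and e: "Lop \<beta> m c f = Lop \<beta> m c g"
    show "f = g"
    proof
      fix z
      show "f z = g z"
      proof (cases "z \<in> ball 0 1")
        case True
        have "Lop \<beta> m c (\<lambda>w. f w - g w) = (\<lambda>w. 0)" using e Lop_diff by auto
        then have "(c ^ N - Pm \<beta> m N z) * (f z - g z) = 0"
          using telescope[OF True, of c "\<lambda>w. f w - g w"] by simp
        thus ?thesis using h[OF True] by simp
      next
        case False thus ?thesis using f g by (simp add: Hol_disc_def)
      qed
    qed
  qed
  have img1: "Lop \<beta> m c ` Hol_disc \<subseteq> Hol_disc" using Lop_Hol by auto
  have img2: "Hol_disc \<subseteq> Lop \<beta> m c ` Hol_disc"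
  proof
    fix g assume g: "g \<in> Hol_disc"
    hence gh: "g holomorphic_on ball 0 1" by (simp add: Hol_disc_def)
    define u where "u z = g z / (c ^ N - Pm \<beta> m N z)" for z
    have uh: "u holomorphic_on ball 0 1" unfolding u_def[abs_def] using gh Pm_hol h
      by (intro holomorphic_intros) auto
    define f where "f z = (if z \<in> ball 0 1 then (\<Sum>k<N. c ^ (N - 1 - k) * Pm \<beta> m k z * u (\<beta> ^ k * z)) else 0)" for z
    have "(\<lambda>z. \<Sum>k<N. c ^ (N - 1 - k) * Pm \<beta> m k z * u (\<beta> ^ k * z)) holomorphic_on ball 0 1"
      using Pm_hol hol_comp[OF uh] by (intro holomorphic_intros) auto
    hence "f holomorphic_on ball 0 1"
      by (rule holomorphic_transform) (simp add: f_def)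
    hence fH: "f \<in> Hol_disc" unfolding Hol_disc_def by (simp add: f_def)
    have "Lop \<beta> m c f = g"
    proof
      fix z show "Lop \<beta> m c f z = g z"
      proof (cases "z \<in> ball 0 1")
        case False thus ?thesis using Lop_out[OF False fH] g by (simp add: Hol_disc_def)
      next
        case True
        define a where "a k = c ^ (N - k) * Pm \<beta> m k z * u (\<beta> ^ k * z)" for k
        have s1: "c * f z = (\<Sum>k<N. a k)"
        proof -
          have "c * f z = (\<Sum>k<N. c * (c ^ (N - 1 - k) * Pm \<beta> m k z * u (\<beta> ^ k * z)))"
            using True by (simp add: f_def sum_distrib_left)
          also have "\<dots> = (\<Sum>k<N. a k)"
          proof (rule sum.cong)
            fix k assume "k \<in> {..<N}"
            hence "N - k = Suc (N - 1 - k)" by auto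
            thus "c * (c ^ (N - 1 - k) * Pm \<beta> m k z * u (\<beta> ^ k * z)) = a k"
              by (simp add: a_def)
          qed simp
          finally show ?thesis .
        qed
        have s2: "m z * f (\<beta> * z) = (\<Sum>k<N. a (Suc k))"
        proof -
          have "m z * f (\<beta> * z) = (\<Sum>k<N. m z * (c ^ (N - 1 - k) * Pm \<beta> m k (\<beta> * z) * u (\<beta> ^ k * (\<beta> * z))))"
            using bz_ball1[OF True] by (simp add: f_def sum_distrib_left)
          also have "\<dots> = (\<Sum>k<N. a (Suc k))"
          proof (rule sum.cong)
            fix k assume "k \<in> {..<N}"
            have "N - 1 - k = N - Suc k" by simp
            thus "m z * (c ^ (N - 1 - k) * Pm \<beta> m k (\<beta> * z) * u (\<beta> ^ k * (\<beta> * z))) = a (Suc k)"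
              by (simp add: a_def Pm_Suc mult_ac)
          qed simp
          finally show ?thesis .
        qed
        have "Lop \<beta> m c f z = (\<Sum>k<N. a k - a (Suc k))"
          using Lop_ball[OF True] s1 s2 by (simp add: sum_subtractf)
        also have "\<dots> = a 0 - a N" by (rule sum_lessThan_telescope')
        also have "\<dots> = (c ^ N - Pm \<beta> m N z) * u z" by (simp add: a_def bN algebra_simps Pm_def)
        also have "\<dots> = g z" using h[OF True] by (simp add: u_def)
        finally show ?thesis .
      qed
    qed
    thus "g \<in> Lop \<beta> m c ` Hol_disc" using fH by blast
  qed
  show ?thesis unfolding bij_betw_def using inj img1 img2 by blast
qed

lemma one_Hol: "(\<lambda>z. if z \<in> ball 0 1 then 1 else 0) \<in> Hol_disc"
proof -
  have "(\<lambda>z. 1::complex) holomorphic_on ball 0 1" by (intro holomorphic_intros)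
  hence "(\<lambda>z. if z \<in> ball 0 1 then 1 else 0::complex) holomorphic_on ball 0 1"
    by (rule holomorphic_transform) simp
  thus ?thesis by (simp add: Hol_disc_def)
qed

lemma point_spec:
  assumes "z1 \<in> ball 0 1" "\<forall>f\<in>Hol_disc. Lop \<beta> m c f z1 = 0"
  shows "\<not> bij_betw (Lop \<beta> m c) Hol_disc Hol_disc"
proof
  assume "bij_betw (Lop \<beta> m c) Hol_disc Hol_disc"
  then obtain f where "f \<in> Hol_disc" "Lop \<beta> m c f = (\<lambda>z. if z \<in> ball 0 1 then 1 else 0)"
    using one_Hol unfolding bij_betw_def by (metis imageE)
  thus False using assms by (metis one_neq_zero)
qed

lemma m0_spec: "\<not> bij_betw (Lop \<beta> m (m 0)) Hol_disc Hol_disc"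
  by (rule point_spec[of 0]) (simp_all add: Lop_ball)

lemma rot:
  assumes "bij_betw (Lop \<beta> m (\<beta> * c)) Hol_disc Hol_disc" "\<beta> * c \<noteq> m 0"
  shows "bij_betw (Lop \<beta> m c) Hol_disc Hol_disc"
proof -
  have rel: "Lop \<beta> m (\<beta> * c) (\<lambda>w. w * f w) z = \<beta> * z * Lop \<beta> m c f z" if "f \<in> Hol_disc" for f z
    by (cases "z \<in> ball 0 1") (use that in \<open>auto simp: Lop_def wcomp_op_def Hol_disc_def algebra_simps\<close>)
  have zH: "(\<lambda>w. w * f w) \<in> Hol_disc" if "f \<in> Hol_disc" for f
    using that by (auto simp: Hol_disc_def intro!: holomorphic_intros)
  have b0: "\<beta> \<noteq> 0" using norm_b by auto
  from assms(1) have inj': "inj_on (Lop \<beta> m (\<beta> * c)) Hol_disc"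
    and surj': "Lop \<beta> m (\<beta> * c) ` Hol_disc = Hol_disc" by (auto simp: bij_betw_def)
  have inj: "inj_on (Lop \<beta> m c) Hol_disc"
  proof (rule inj_onI)
    fix f g assume f: "f \<in> Hol_disc" and g: "g \<in> Hol_disc" and e: "Lop \<beta> m c f = Lop \<beta> m c g"
    have "Lop \<beta> m (\<beta> * c) (\<lambda>w. w * f w) = Lop \<beta> m (\<beta> * c) (\<lambda>w. w * g w)"
      using rel[OF f] rel[OF g] e by auto
    hence zz: "(\<lambda>w. w * f w) = (\<lambda>w. w * g w)" using inj' zH f g by (meson inj_onD)
    have ne: "f w = g w" if "w \<noteq> 0" for w using zz that by (metis mult_cancel_left)
    have "(\<lambda>w. f w - g w) 0 = 0"
      by (rule zero_at_0) (use f g ne in \<open>auto simp: Hol_disc_def intro!: holomorphic_intros\<close>)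
    thus "f = g" using ne by (metis eq_iff_diff_eq_0 ext)
  qed
  have img1: "Lop \<beta> m c ` Hol_disc \<subseteq> Hol_disc" using Lop_Hol by auto
  have img2: "Hol_disc \<subseteq> Lop \<beta> m c ` Hol_disc"
  proof
    fix g assume g: "g \<in> Hol_disc"
    have GH: "(\<lambda>z. \<beta> * (z * g z)) \<in> Hol_disc"
      using g by (auto simp: Hol_disc_def intro!: holomorphic_intros)
    then obtain u where u: "u \<in> Hol_disc" and uG: "Lop \<beta> m (\<beta> * c) u = (\<lambda>z. \<beta> * (z * g z))"
      using surj' by (metis imageE)
    have "Lop \<beta> m (\<beta> * c) u 0 = 0" using uG by simp
    hence "(\<beta> * c - m 0) * u 0 = 0" by (simp add: Lop_ball algebra_simps)
    hence u0: "u 0 = 0" using assms(2) by simp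
    have uh: "u holomorphic_on ball 0 1" using u by (simp add: Hol_disc_def)
    define f where "f z = (if z \<in> ball 0 1 then (if z = 0 then deriv u 0 else (u z - u 0) / (z - 0)) else 0)" for z
    have "(\<lambda>z. if z = 0 then deriv u 0 else (u z - u 0) / (z - 0)) holomorphic_on ball 0 1"
      by (rule pole_lemma[OF uh]) simp
    hence "f holomorphic_on ball 0 1" by (rule holomorphic_transform) (simp add: f_def)
    hence fH: "f \<in> Hol_disc" by (simp add: Hol_disc_def f_def)
    have zf: "(\<lambda>w. w * f w) = u"
    proof
      fix w show "w * f w = u w"
        using u u0 by (cases "w \<in> ball 0 1") (auto simp: f_def Hol_disc_def)
    qed
    have ne: "Lop \<beta> m c f z = g z" if "z \<noteq> 0" for z
    proof -
      have "\<beta> * z * Lop \<beta> m c f z = \<beta> * z * g z"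
        using rel[OF fH, of z] zf uG by (auto simp: mult.assoc)
      thus ?thesis using b0 that by simp
    qed
    have "(\<lambda>w. Lop \<beta> m c f w - g w) 0 = 0"
      by (rule zero_at_0) (use Lop_Hol[OF fH] g ne in \<open>auto simp: Hol_disc_def intro!: holomorphic_intros\<close>)
    hence "Lop \<beta> m c f = g" using ne by (metis eq_iff_diff_eq_0 ext)
    thus "g \<in> Lop \<beta> m c ` Hol_disc" using fH by blast
  qed
  show ?thesis unfolding bij_betw_def using inj img1 img2 by blast
qed

lemma chain:
  assumes "m 0 \<noteq> 0" "i < N" "bij_betw (Lop \<beta> m (\<beta> ^ i * m 0)) Hol_disc Hol_disc"
  shows False
  using assms(2,3)
proof (induction i)
  case 0
  then show ?case using m0_spec by simp
next
  case (Suc i)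
  have "Suc i \<in> {1..<N}" using Suc.prems(1) by auto
  hence "\<beta> ^ Suc i \<noteq> 1" using bk by blast
  hence ne: "\<beta> * (\<beta> ^ i * m 0) \<noteq> m 0" using assms(1) by (metis mult.assoc mult_cancel_right1 power_Suc)
  have "bij_betw (Lop \<beta> m (\<beta> * (\<beta> ^ i * m 0))) Hol_disc Hol_disc"
    using Suc.prems(2) by (simp add: mult.assoc)
  from rot[OF this ne] Suc show False by simp
qed

lemma pow_inj_lt: "i < j \<Longrightarrow> j < N \<Longrightarrow> \<beta> ^ i \<noteq> \<beta> ^ j"
proof
  assume ij: "i < j" "j < N" and e: "\<beta> ^ i = \<beta> ^ j"
  have b0: "\<beta> \<noteq> 0" using norm_b by auto
  have "\<beta> ^ j = \<beta> ^ i * \<beta> ^ (j - i)" using ij by (simp add: power_add[symmetric])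
  hence "\<beta> ^ (j - i) = 1" using e b0 by simp
  moreover have "j - i \<in> {1..<N}" using ij by auto
  ultimately show False using bk by blast
qed

lemma roots: "x ^ N = 1 \<Longrightarrow> \<exists>j<N. x = \<beta> ^ j"
proof -
  assume x: "x ^ N = 1"
  have inj: "inj_on (\<lambda>j. \<beta> ^ j) {..<N}"
    by (rule inj_onI) (metis lessThan_iff linorder_neqE_nat pow_inj_lt)
  have sub: "(\<lambda>j. \<beta> ^ j) ` {..<N} \<subseteq> {z. z ^ N = 1}"
  proof
    fix y assume "y \<in> (\<lambda>j. \<beta> ^ j) ` {..<N}"
    then obtain j where "y = \<beta> ^ j" by auto
    moreover have "(\<beta> ^ j) ^ N = (\<beta> ^ N) ^ j" by (simp add: power_mult[symmetric] mult.commute)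
    ultimately show "y \<in> {z. z ^ N = 1}" using bN by simp
  qed
  have c: "card {z::complex. z ^ N = 1} = N" using N2 card_complex_roots_unity by simp
  have fin: "finite {z::complex. z ^ N = 1}" using c N2 card_ge_0_finite by fastforce
  have "(\<lambda>j. \<beta> ^ j) ` {..<N} = {z. z ^ N = 1}"
    by (rule card_subset_eq[OF fin sub]) (simp add: c card_image[OF inj])
  thus ?thesis using x by auto
qed

end

theorem proposition3p2:
  fixes \<beta> :: complex and N :: nat and m :: "complex \<Rightarrow> complex"
  assumes "N \<ge> 2" and "\<beta> ^ N = 1" and "\<forall>k\<in>{1..<N}. \<beta> ^ k \<noteq> 1"
    and "m holomorphic_on ball 0 1" and "\<exists>z\<in>ball 0 1. m z \<noteq> 0"
  shows "spectrum_Hol (wcomp_op \<beta> m) =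
           {c. c ^ N \<in> (\<lambda>z. \<Prod>k<N. m (\<beta> ^ k * z)) ` ball 0 1}"
proof -
  note A = assms(1-4)
  have Pm_eq: "(\<lambda>z. \<Prod>k<N. m (\<beta> ^ k * z)) = (\<lambda>z. Pm \<beta> m N z)" by (simp add: Pm_def[abs_def])
  have N0: "N \<noteq> 0" using assms(1) by simp
  show ?thesis
  proof (rule set_eqI)
    fix c
    show "c \<in> spectrum_Hol (wcomp_op \<beta> m) \<longleftrightarrow> c \<in> {c. c ^ N \<in> (\<lambda>z. \<Prod>k<N. m (\<beta> ^ k * z)) ` ball 0 1}"
    proof
      assume "c \<in> spectrum_Hol (wcomp_op \<beta> m)"
      thus "c \<in> {c. c ^ N \<in> (\<lambda>z. \<Prod>k<N. m (\<beta> ^ k * z)) ` ball 0 1}"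
        using resolvent[OF A, of c] unfolding spec_iff Pm_eq by blast
    next
      assume "c \<in> {c. c ^ N \<in> (\<lambda>z. \<Prod>k<N. m (\<beta> ^ k * z)) ` ball 0 1}"
      then obtain z0 where z0: "z0 \<in> ball 0 1" and cz: "c ^ N = Pm \<beta> m N z0"
        unfolding Pm_eq by auto
      have "\<not> bij_betw (Lop \<beta> m c) Hol_disc Hol_disc"
      proof (cases "c = 0")
        case True
        hence "Pm \<beta> m N z0 = 0" using cz N0 by (metis power_0_left)
        then obtain i where i: "i < N" "m (\<beta> ^ i * z0) = 0" unfolding Pm_def by auto
        show ?thesis
          by (rule point_spec[OF A, of "\<beta> ^ i * z0"]) (use True i z0 bz_ball[OF A] in \<open>auto simp: Lop_ball[OF A]\<close>)
      next
        case cnz: False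
        show ?thesis
        proof (cases "z0 = 0")
          case False
          define g where "g z = (if z \<in> ball 0 1 then (\<Prod>j\<in>{1..<N}. (z - \<beta> ^ j * z0)) else 0)" for z
          have "(\<lambda>z. \<Prod>j\<in>{1..<N}. (z - \<beta> ^ j * z0)) holomorphic_on ball 0 1" by (intro holomorphic_intros)
          hence "g holomorphic_on ball 0 1" by (rule holomorphic_transform) (simp add: g_def)
          hence gH: "g \<in> Hol_disc" by (simp add: Hol_disc_def g_def)
          have gz0: "g z0 \<noteq> 0"
          proof -
            have "z0 - \<beta> ^ j * z0 \<noteq> 0" if "j \<in> {1..<N}" for j
            proof
              assume "z0 - \<beta> ^ j * z0 = 0"
              hence "(1 - \<beta> ^ j) * z0 = 0" by (simp add: algebra_simps)
              thus False using False assms(3) that by simp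
            qed
            thus ?thesis using z0 by (simp add: g_def)
          qed
          have gk: "g (\<beta> ^ k * z0) = 0" if "k \<in> {1..<N}" for k
            using that bz_ball[OF A z0, of k] by (auto simp: g_def)
          show ?thesis
          proof
            assume "bij_betw (Lop \<beta> m c) Hol_disc Hol_disc"
            then obtain f where f: "f \<in> Hol_disc" and fg: "Lop \<beta> m c f = g"
              using gH unfolding bij_betw_def by (metis imageE)
            have "(\<Sum>k<N. c ^ (N - 1 - k) * Pm \<beta> m k z0 * g (\<beta> ^ k * z0)) = 0"
              using telescope[OF A z0, of c f] cz fg by simp
            moreover have "(\<Sum>k<N. c ^ (N - 1 - k) * Pm \<beta> m k z0 * g (\<beta> ^ k * z0))
                = (\<Sum>k<N. if k = 0 then c ^ (N - 1) * g z0 else 0)"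
            proof (rule sum.cong)
              fix k assume "k \<in> {..<N}"
              thus "c ^ (N - 1 - k) * Pm \<beta> m k z0 * g (\<beta> ^ k * z0) = (if k = 0 then c ^ (N - 1) * g z0 else 0)"
                using gk[of k] by (cases "k = 0") (auto simp: Pm_def)
            qed simp
            moreover have "(\<Sum>k<N. if k = 0 then c ^ (N - 1) * g z0 else 0) = c ^ (N - 1) * g z0"
              using N0 by (simp add: sum.delta')
            ultimately show False using cnz gz0 by simp
          qed
        next
          case True
          have p0: "Pm \<beta> m N 0 = m 0 ^ N" by (simp add: Pm_def)
          have m0: "m 0 \<noteq> 0" using cz True p0 cnz N0 by (metis power_0_left power_eq_0_iff)
          have "(c / m 0) ^ N = 1" using cz True p0 m0 by (simp add: power_divide)
          then obtain j where j: "j < N" "c / m 0 = \<beta> ^ j" using roots[OF A] by blast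
          hence "c = \<beta> ^ j * m 0" using m0 by (simp add: field_simps)
          thus ?thesis using chain[OF A m0 j(1)] by blast
        qed
      qed
      thus "c \<in> spectrum_Hol (wcomp_op \<beta> m)" unfolding spec_iff .
    qed
  qed
qed

end
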